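(* Consider the finite-sum problem $\min_{\theta\in\mathbb{R}^n}\Psi(\theta)=\frac1N\sum_{i=1}^N\psi_i(\theta)$ and the following stochastic method (S2QN). Fix constants $0<r_1<r_2$, a positive sequence $\{\alpha_k\}$, and step sizes $\beta_k\equiv 1$. At iteration $k$, random index sets $\mathcal S_g^k\subseteq\{1,\dots,N\}$ are chosen, $g_k=\nabla_{\mathcal S_g^k}\Psi(\theta_k):=\frac{1}{|\mathcal S_g^k|}\sum_{i\in\mathcal S_g^k}\nabla\psi_i(\theta_k)$, a symmetric matrix $B_k=H_k+\Lambda_k$ is formed (base matrix $H_k$ plus quasi-Newton refinement matrix $\Lambda_k$), the regularization parameter is $$\lambda_k=\begin{cases}\frac{2r_1}{\|g_{k-1}\|+r_1}\alpha_k^{-1}, & \|g_{k-1}\|<r_1,\\ \frac{2\|g_{k-1}\|}{\|g_{k-1}\|+r_2}\alpha_k^{-1}, & \|g_{k-1}\|>r_2,\\ \alpha_k^{-1}, &\text{otherwise},\end{cases}$$ and $\theta_{k+1}=\theta_k+\beta_k d_k$ with $d_k=-(B_k+\lambda_kI)^{-1}g_k$. Let $\{\mathcal F_k\}$ be a filtration with $\theta_k$ being $\mathcal F_{k-1}$-measurable. Assume: (i) $\Psi$ is continuously differentiable on $\mathbb{R}^n$, bounded below by $\Psi_{\inf}$, and $\nabla\Psi$ is Lipschitz continuous on $\mathbb{R}^n$ with constant $L_\Psi\ge 1$; (ii) for every $k$, $B_k$ and $\nabla_{\mathcal S_g^k}\Psi(\theta_k)$ are conditionally independent given $\mathcal F_{k-1}$,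 and almost surely $\mathbb{E}[\nabla_{\mathcal S_g^k}\Psi(\theta_k)\mid\mathcal F_{k-1}]=\nabla\Psi(\theta_k)$; (iii) almost surely $\mathbb{E}[\|\nabla_{\mathcal S_g^k}\Psi(\theta_k)-\nabla\Psi(\theta_k)\|^2\mid\mathcal F_{k-1}]\le\sigma_k^2$; (iv) there is $h>0$ with $0\preceq B_k\preceq hI$ for all $k$. If $\alpha_k\le\frac{r_1}{4r_2(L_\Psi+h)}$ for all $k$, $\sum_k\alpha_k=\infty$ and $\sum_k\alpha_k\sigma_k^2<\infty$, then almost surely $\lim_{k\to\infty}\nabla\Psi(\theta_k)=0$.
   Context: $\psi_i:\mathbb{R}^n\to\mathbb{R}$ are component functions. The base matrix $H_k$ represents partial Hessian information (e.g. a subsampled Hessian or a Gauss–Newton/Fisher approximation) and $\Lambda_k$ is a quasi-Newton matrix built from previous iterates; the theorem only uses the properties (ii) and (iv) of $B_k=H_k+\Lambda_k$. $g_{k-1}$ denotes the stochastic gradient used at the previous iteration. *)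

theory Defs
  imports "HOL-Analysis.Analysis" "HOL-Probability.Probability"
begin

definition s2qn_lambda :: "real \<Rightarrow> real \<Rightarrow> real \<Rightarrow> real \<Rightarrow> real" where
  "s2qn_lambda r1 r2 a v =
     (if v < r1 then (2 * r1 / (v + r1)) / a
      else if v > r2 then (2 * v / (v + r2)) / a
      else 1 / a)"

definition loewner_le :: "real^'n^'n \<Rightarrow> real^'n^'n \<Rightarrow> bool" where
  "loewner_le A B \<longleftrightarrow> (\<forall>x. x \<bullet> (A *v x) \<le> x \<bullet> (B *v x))"

definition cond_indep ::
  "'w measure \<Rightarrow> 'w measure \<Rightarrow> ('w \<Rightarrow> 'a::topological_space) \<Rightarrow> ('w \<Rightarrow> 'b::topological_space) \<Rightarrow> bool" where
  "cond_indep M F X Y \<longleftrightarrow>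
     (\<forall>A \<in> sets borel. \<forall>C \<in> sets borel.
        AE w in M. real_cond_exp M F (indicator (X -` A \<inter> Y -` C \<inter> space M)) w
                   = real_cond_exp M F (indicator (X -` A \<inter> space M)) w
                     * real_cond_exp M F (indicator (Y -` C \<inter> space M)) w)"

end

theory Submission
  imports Defs
begin


lemma mat_mulv: "(mat c :: real^'n^'n) *v x = c *\<^sub>R x"
  apply (vector matrix_vector_mult_def mat_def)
  apply (simp add: if_distrib if_distribR cong del: if_weak_cong)
  done

lemma sym_inner: assumes "transpose B = (B::real^'n^'n)" shows "x \<bullet> (B *v y) = (B *v x) \<bullet> y"
  by (metis assms dot_lmul_matrix vector_transpose_matrix)

lemma psd_cs:
  fixes B :: "real^'n^'n"
  assumes sym: "transpose B = B" and psd: "\<And>z. 0 \<le> z \<bullet> (B *v z)"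
  shows "(x \<bullet> (B *v y))^2 \<le> (x \<bullet> (B *v x)) * (y \<bullet> (B *v y))"
proof -
  let ?p = "x \<bullet> (B *v x)" and ?q = "x \<bullet> (B *v y)" and ?r = "y \<bullet> (B *v y)"
  have quad: "0 \<le> ?p + 2*t*?q + t^2 * ?r" for t
  proof -
    have "0 \<le> (x + t *\<^sub>R y) \<bullet> (B *v (x + t *\<^sub>R y))" by (rule psd)
    also have "\<dots> = ?p + 2*t*?q + t^2 * ?r"
      using sym_inner[OF sym, of y x]
      by (simp add: matrix_vector_right_distrib matrix_vector_mult_scaleR inner_add_left inner_add_right power2_eq_square algebra_simps inner_commute)
    finally show ?thesis .
  qed
  show ?thesis
  proof (cases "?r = 0")
    case True
    have "?q = 0"
    proof (rule ccontr)
      assume "?q \<noteq> 0"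
      have "0 \<le> ?p + 2*(-(?p+1)/(2*?q))*?q" using quad[of "-(?p+1)/(2*?q)"] True by simp
      then show False using \<open>?q \<noteq> 0\<close> by (simp add: field_simps)
    qed
    then show ?thesis using True by simp
  next
    case False
    then have rpos: "?r > 0" using psd[of y] by simp
    have "0 \<le> ?p + 2*(-?q/?r)*?q + (-?q/?r)^2 * ?r" by (rule quad)
    also have "\<dots> = ?p - ?q^2/?r" using rpos by (simp add: field_simps power2_eq_square)
    finally show ?thesis using rpos by (simp add: field_simps)
  qed
qed

lemma psd_norm:
  fixes B :: "real^'n^'n"
  assumes sym: "transpose B = B" and psd: "\<And>z. 0 \<le> z \<bullet> (B *v z)"
    and ub: "\<And>z. z \<bullet> (B *v z) \<le> h * (z \<bullet> z)" and h: "0 \<le> h"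
  shows "norm (B *v u) \<le> h * norm u"
proof -
  let ?b = "B *v u"
  have "(?b \<bullet> (B *v u))^2 \<le> (?b \<bullet> (B *v ?b)) * (u \<bullet> (B *v u))"
    by (rule psd_cs[OF sym psd])
  also have "\<dots> \<le> (h * (?b \<bullet> ?b)) * (h * (u \<bullet> u))"
    by (intro mult_mono ub psd) (use h in auto)
  finally have "(norm ?b)^4 \<le> h^2 * (norm ?b)^2 * (norm u)^2"
    by (simp add: power2_norm_eq_inner[symmetric] power_mult_distrib algebra_simps power2_eq_square) (smt (verit) mult.assoc mult.commute numeral_Bit0 power2_eq_square power_add power_numeral_reduce)
  then have "(norm ?b)^2 \<le> (h * norm u)^2"
  proof (cases "norm ?b = 0")
    case False
    then have "(norm ?b)^2 * (norm ?b)^2 \<le> (h^2 * (norm u)^2) * (norm ?b)^2"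
      using \<open>(norm ?b)^4 \<le> _\<close> by (simp add: algebra_simps power2_eq_square power4_eq_xxxx)
    moreover have "0 < (norm ?b)^2" using False by simp
    ultimately have "(norm ?b)^2 \<le> h^2 * (norm u)^2" by (rule mult_right_le_imp_le)
    then show ?thesis by (simp add: power_mult_distrib)
  qed simp
  then show ?thesis using h by (simp add: power2_le_iff_abs_le)
qed

lemma precond:
  fixes B :: "real^'n^'n"
  assumes sym: "transpose B = B" and psd: "\<And>z. 0 \<le> z \<bullet> (B *v z)"
    and ub: "\<And>z. z \<bullet> (B *v z) \<le> h * (z \<bullet> z)" and h: "0 \<le> h"
    and a: "0 < a" and lam1: "1/a \<le> lam" and lam2: "lam \<le> 2/a" and ah: "a * h \<le> 1/4"
  shows "(8/25) * a * (v \<bullet> v) \<le> v \<bullet> (matrix_inv (B + mat lam) *v v)"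
    and "norm (matrix_inv (B + mat lam) *v v) \<le> a * norm v"
proof -
  define Q where "Q = B + mat lam"
  have lampos: "lam > 0" using a lam1 by (smt (verit) divide_pos_pos)
  have Qv: "Q *v z = B *v z + lam *\<^sub>R z" for z
    by (simp add: Q_def matrix_vector_mult_add_rdistrib mat_mulv)
  have Qq: "z \<bullet> (Q *v z) \<ge> lam * (z \<bullet> z)" for z
    using psd[of z] by (simp add: Qv inner_add_right)
  have "inj ((*v) Q)"
  proof (rule injI)
    fix x y assume "Q *v x = Q *v y"
    then have "Q *v (x - y) = 0" by (simp add: matrix_vector_mult_diff_distrib)
    then have "lam * ((x-y) \<bullet> (x-y)) \<le> 0" using Qq[of "x-y"] by simp
    then have "(x-y) \<bullet> (x-y) \<le> 0" using lampos by (simp add: mult_le_0_iff)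
    then show "x = y" by (metis inner_eq_zero_iff inner_ge_zero order.antisym eq_iff_diff_eq_0)
  qed
  then have "invertible Q" using matrix_left_invertible_injective invertible_left_inverse by blast
  then have QP: "Q ** matrix_inv Q = mat 1"
    unfolding invertible_def matrix_inv_def by (rule someI_ex[where P="\<lambda>A'. Q ** A' = mat 1 \<and> A' ** Q = mat 1", THEN conjunct1])
  define u where "u = matrix_inv Q *v v"
  have vu: "v = Q *v u" unfolding u_def by (simp add: matrix_vector_mul_assoc QP)
  have nBu: "norm (B *v u) \<le> h * norm u" by (rule psd_norm[OF sym psd ub h])
  have "norm v \<le> norm (B *v u) + lam * norm u" using vu Qv[of u] lampos
    by (metis abs_of_pos norm_scaleR norm_triangle_ineq)
  also have "\<dots> \<le> (h + lam) * norm u" using nBu by (simp add: algebra_simps)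
  finally have nv: "norm v \<le> (h + lam) * norm u" .
  have key: "lam * (norm u)^2 \<le> v \<bullet> u"
    using Qq[of u] vu by (simp add: power2_norm_eq_inner inner_commute)
  have "v \<bullet> u \<le> norm v * norm u" by (rule Cauchy_Schwarz_ineq2[THEN order_trans[OF abs_ge_self]])
  show "norm (matrix_inv (B + mat lam) *v v) \<le> a * norm v"
  proof -
    have "lam * (norm u)^2 \<le> norm v * norm u" using key \<open>v \<bullet> u \<le> _\<close> by linarith
    then have "lam * norm u \<le> norm v"
      by (cases "norm u = 0") (auto simp: power2_eq_square)
    then have "norm u \<le> norm v / lam" using lampos by (simp add: field_simps)
    also have "\<dots> \<le> a * norm v"
    proof -
      have "1 / lam \<le> a" using lam1 a lampos by (simp add: field_simps)
      then show ?thesis by (metis divide_inverse inverse_eq_divide mult.commute mult_right_mono norm_ge_zero)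
    qed
    finally show ?thesis by (simp add: u_def Q_def)
  qed
  show "(8/25) * a * (v \<bullet> v) \<le> v \<bullet> (matrix_inv (B + mat lam) *v v)"
  proof -
    have "1 \<le> a * lam" using lam1 a by (simp add: field_simps)
    then have "a * (4*h) \<le> a * lam" using ah by linarith
    then have hl: "h \<le> lam / 4" using a by (simp add: mult_le_cancel_left_pos)
    have al: "a * lam \<le> 2" using lam2 a by (simp add: field_simps)
    have "v \<bullet> v = (norm v)^2" by (simp add: power2_norm_eq_inner)
    also have "\<dots> \<le> ((h + lam) * norm u)^2" using nv by (simp add: power_mono)
    also have "\<dots> \<le> ((5/4) * lam * norm u)^2" using hl h lampos by (intro power_mono mult_right_mono) auto
    finally have "(8/25) * a * (v \<bullet> v) \<le> (8/25) * a * (((5/4) * lam * norm u)^2)" using a by simp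
    also have "\<dots> = (a * lam) / 2 * (lam * (norm u)^2)" by (simp add: power2_eq_square)
    also have "\<dots> \<le> 1 * (lam * (norm u)^2)" using al lampos by (intro mult_right_mono) auto
    also have "\<dots> \<le> v \<bullet> u" using key by simp
    finally show ?thesis by (simp add: u_def Q_def)
  qed
qed



lemma descent:
  fixes Psi :: "real^'n \<Rightarrow> real" and G :: "real^'n \<Rightarrow> real^'n"
  assumes deriv: "\<And>x. (Psi has_derivative (\<lambda>d. G x \<bullet> d)) (at x)"
    and lip: "\<And>x y. norm (G x - G y) \<le> L * norm (x - y)"
  shows "Psi (x + d) \<le> Psi x + G x \<bullet> d + L/2 * (norm d)^2"
proof -
  define phi where "phi t = Psi (x + t *\<^sub>R d) - t * (G x \<bullet> d) - L/2 * t^2 * (norm d)^2" for t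
  have D: "DERIV phi t :> (G (x + t *\<^sub>R d) \<bullet> d - G x \<bullet> d - L * t * (norm d)^2)" for t
  proof -
    have l: "((\<lambda>t. x + t *\<^sub>R d) has_derivative (\<lambda>s. s *\<^sub>R d)) (at t)"
      by (auto intro!: derivative_eq_intros)
    have c: "((\<lambda>t. Psi (x + t *\<^sub>R d)) has_derivative (\<lambda>s. G (x + t *\<^sub>R d) \<bullet> (s *\<^sub>R d))) (at t)"
      using has_derivative_compose[OF l deriv] by simp
    have c2: "((\<lambda>t. Psi (x + t *\<^sub>R d)) has_field_derivative (G (x + t *\<^sub>R d) \<bullet> d)) (at t)"
      by (rule has_derivative_imp_has_field_derivative[OF c]) simp
    show ?thesis unfolding phi_def
      by (rule derivative_eq_intros c2 | simp)+
  qed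
  have "phi 1 \<le> phi 0"
  proof (rule DERIV_nonpos_imp_nonincreasing[of 0 1 phi])
    fix t :: real assume t: "0 \<le> t" "t \<le> 1"
    have "G (x + t *\<^sub>R d) \<bullet> d - G x \<bullet> d = (G (x + t *\<^sub>R d) - G x) \<bullet> d" by (simp add: inner_diff_left)
    also have "\<dots> \<le> norm (G (x + t *\<^sub>R d) - G x) * norm d" by (rule norm_cauchy_schwarz)
    also have "\<dots> \<le> (L * norm (t *\<^sub>R d)) * norm d"
      using lip[of "x + t *\<^sub>R d" x] by (intro mult_right_mono) auto
    also have "\<dots> = L * t * (norm d)^2" using t by (simp add: power2_eq_square)
    finally show "\<exists>y. DERIV phi t :> y \<and> y \<le> 0" using D[of t] by (intro exI[of _ "G (x + t *\<^sub>R d) \<bullet> d - G x \<bullet> d - L * t * (norm d)^2"]) auto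
  qed simp
  then show ?thesis unfolding phi_def by simp
qed



lemma seq_to_zero:
  fixes z c a :: "nat \<Rightarrow> real"
  assumes z0: "\<And>k. 0 \<le> z k" and c0: "\<And>k. 0 \<le> c k" and cs: "summable c"
    and step: "\<And>k. z (Suc k) \<le> z k + c k"
    and a0: "\<And>k. 0 < a k" and ans: "\<not> summable a" and azs: "summable (\<lambda>k. a k * z k)"
  shows "z \<longlonglongrightarrow> 0"
proof -
  define w where "w k = z k - (\<Sum>j<k. c j)" for k
  have "decseq w" unfolding w_def
    by (intro decseq_SucI) (smt (verit) step sum.lessThan_Suc)
  moreover have "\<forall>i. - suminf c \<le> w i"
  proof
    fix i
    have "sum c {..<i} \<le> suminf c" by (rule sum_le_suminf[OF cs]) (use c0 in auto)
    then show "- suminf c \<le> w i" using z0[of i] unfolding w_def by linarith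
  qed
  ultimately obtain lw where lw: "w \<longlonglongrightarrow> lw" by (rule decseq_convergent)
  have "(\<lambda>k. w k + (\<Sum>j<k. c j)) \<longlonglongrightarrow> lw + suminf c"
    by (intro tendsto_add lw summable_LIMSEQ cs)
  then have zl: "z \<longlonglongrightarrow> lw + suminf c" unfolding w_def by simp
  define l where "l = lw + suminf c"
  have l0: "0 \<le> l" unfolding l_def using zl z0 by (meson LIMSEQ_le_const)
  have "l = 0"
  proof (rule ccontr)
    assume "l \<noteq> 0"
    then have lp: "l > 0" using l0 by simp
    have "eventually (\<lambda>k. z k > l/2) sequentially"
      using zl lp unfolding l_def[symmetric] by (intro order_tendstoD) auto
    then have "eventually (\<lambda>k. norm (a k) \<le> (2/l) * (a k * z k)) sequentially"
    proof (rule eventually_mono)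
      fix k assume "z k > l/2"
      then have "a k * (l/2) \<le> a k * z k" using a0[of k] by (intro mult_left_mono) auto
      then show "norm (a k) \<le> (2/l) * (a k * z k)" using lp a0[of k] by (simp add: field_simps)
    qed
    moreover have "summable (\<lambda>k. (2/l) * (a k * z k))" by (intro summable_mult azs)
    ultimately have "summable a" by (rule summable_comparison_test_ev)
    then show False using ans by simp
  qed
  then show ?thesis using zl l_def by simp
qed

lemma xseq_to_zero:
  fixes x y a :: "nat \<Rightarrow> real"
  assumes x0: "\<And>k. 0 \<le> x k" and y0: "\<And>k. 0 \<le> y k" and c0: "0 \<le> c"
    and step: "\<And>k. x (Suc k) \<le> x k + c * a k * (x k + y k)"
    and ca: "\<And>k. c * a k \<le> 1/4"
    and a0: "\<And>k. 0 < a k" and ans: "\<not> summable a"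
    and axs: "summable (\<lambda>k. a k * (x k)^2)" and ays: "summable (\<lambda>k. a k * (y k)^2)"
  shows "x \<longlonglongrightarrow> 0"
proof -
  have st: "(x (Suc k))^2 \<le> (x k)^2 + 4 * c * (a k * (x k)^2 + a k * (y k)^2)" for k
  proof -
    define t where "t = c * a k"
    have t0: "0 \<le> t" "t \<le> 1/4" using c0 a0[of k] ca[of k] by (auto simp: t_def)
    have "(x (Suc k))^2 \<le> (x k + t * (x k + y k))^2"
      using step[of k] x0[of "Suc k"] by (intro power_mono) (auto simp: t_def mult.assoc)
    also have "\<dots> = (x k)^2 + t * (2 * (x k)^2 + 2 * x k * y k) + t * (t * (x k + y k)^2)"
      by (simp add: power2_eq_square algebra_simps)
    also have "\<dots> \<le> (x k)^2 + t * (3 * (x k)^2 + (y k)^2) + t * ((1/4) * (2 * ((x k)^2 + (y k)^2)))"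
    proof -
      have "2 * x k * y k \<le> (x k)^2 + (y k)^2"
        using power2_diff[of "x k" "y k"] zero_le_power2[of "x k - y k"] by linarith
      moreover have "(x k + y k)^2 \<le> 2 * ((x k)^2 + (y k)^2)"
      proof -
        have "(x k + y k)^2 + (x k - y k)^2 = 2 * ((x k)^2 + (y k)^2)" by (simp add: power2_eq_square algebra_simps)
        then show ?thesis using zero_le_power2[of "x k - y k"] by linarith
      qed
      moreover have "t * (x k + y k)^2 \<le> (1/4) * (2 * ((x k)^2 + (y k)^2))"
        using t0 \<open>(x k + y k)^2 \<le> _\<close> by (intro mult_mono) auto
      ultimately have "t * (2 * (x k)^2 + 2 * x k * y k) \<le> t * (3 * (x k)^2 + (y k)^2)"
        using t0 by (intro mult_left_mono) auto
      moreover have "t * (t * (x k + y k)^2) \<le> t * ((1/4) * (2 * ((x k)^2 + (y k)^2)))"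
        using \<open>t * (x k + y k)^2 \<le> _\<close> t0 by (intro mult_left_mono) auto
      ultimately show ?thesis by linarith
    qed
    also have "\<dots> \<le> (x k)^2 + 4 * t * ((x k)^2 + (y k)^2)"
    proof -
      have e: "t * (3 * (x k)^2 + (y k)^2) + t * ((1/4) * (2 * ((x k)^2 + (y k)^2)))
          = t * ((7/2) * (x k)^2 + (3/2) * (y k)^2)" by (simp add: algebra_simps)
      have "(7/2) * (x k)^2 + (3/2) * (y k)^2 \<le> 4 * ((x k)^2 + (y k)^2)"
        using zero_le_power2[of "x k"] zero_le_power2[of "y k"] by (simp add: field_simps)
      then have "t * ((7/2) * (x k)^2 + (3/2) * (y k)^2) \<le> t * (4 * ((x k)^2 + (y k)^2))"
        by (rule mult_left_mono) (use t0 in auto)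
      then show ?thesis using e by (simp add: algebra_simps)
    qed
    finally show ?thesis by (simp add: t_def algebra_simps)
  qed
  have "(\<lambda>k. (x k)^2) \<longlonglongrightarrow> 0"
  proof (rule seq_to_zero[where c="\<lambda>k. 4 * c * (a k * (x k)^2 + a k * (y k)^2)" and a=a])
    show "\<And>k. 0 \<le> 4 * c * (a k * (x k)\<^sup>2 + a k * (y k)\<^sup>2)" using c0 a0 by (intro mult_nonneg_nonneg add_nonneg_nonneg) (auto intro: less_imp_le)
    show "summable (\<lambda>k. 4 * c * (a k * (x k)\<^sup>2 + a k * (y k)\<^sup>2))" by (intro summable_mult summable_add axs ays)
  qed (use st a0 ans axs in auto)
  then have "(\<lambda>k. sqrt ((x k)^2)) \<longlonglongrightarrow> sqrt 0" by (rule tendsto_real_sqrt)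
  then show ?thesis using x0 by simp
qed



lemma step_bound:
  fixes Psi :: "real^'n \<Rightarrow> real" and G :: "real^'n \<Rightarrow> real^'n" and P :: "real^'n^'n"
  assumes deriv: "\<And>x. (Psi has_derivative (\<lambda>d. G x \<bullet> d)) (at x)"
    and lip: "\<And>x y. norm (G x - G y) \<le> L * norm (x - y)"
    and L0: "0 \<le> L" and a0: "0 < a" and aL: "a * L \<le> 1/4"
    and P1: "\<And>v. (8/25) * a * (v \<bullet> v) \<le> v \<bullet> (P *v v)"
    and P2: "\<And>v. norm (P *v v) \<le> a * norm v"
  shows "Psi (th - P *v gg) \<le> Psi th - (3/100) * a * (norm (G th))^2 + 7 * a * (norm (gg - G th))^2"
    and "norm (G (th - P *v gg)) \<le> norm (G th) + L * a * (norm (G th) + norm (gg - G th))"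
proof -
  define e where "e = gg - G th"
  define X where "X = norm (G th)"
  define Y where "Y = norm e"
  have X0: "0 \<le> X" and Y0: "0 \<le> Y" by (auto simp: X_def Y_def)
  have gge: "gg = G th + e" by (simp add: e_def)
  define d where "d = P *v gg"
  have nd: "norm d \<le> a * (X + Y)"
  proof -
    have "norm d \<le> a * norm gg" unfolding d_def by (rule P2)
    also have "\<dots> \<le> a * (X + Y)" unfolding X_def Y_def gge using a0
      by (intro mult_left_mono norm_triangle_ineq) auto
    finally show ?thesis .
  qed
  show "norm (G (th - P *v gg)) \<le> norm (G th) + L * a * (norm (G th) + norm (gg - G th))"
  proof -
    have "norm (G (th - d)) \<le> norm (G th) + norm (G (th - d) - G th)" by (metis norm_triangle_sub)
    also have "norm (G (th - d) - G th) \<le> L * norm d" using lip[of "th - d" th] by simp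
    also have "L * norm d \<le> L * (a * (X + Y))" using nd L0 by (rule mult_left_mono)
    finally show ?thesis unfolding d_def X_def Y_def e_def by (simp add: algebra_simps)
  qed
  have desc: "Psi (th + (- d)) \<le> Psi th + G th \<bullet> (- d) + L/2 * (norm (- d))^2"
    by (rule descent[OF deriv lip])
  have Gd: "G th \<bullet> d = G th \<bullet> (P *v G th) + G th \<bullet> (P *v e)"
    unfolding d_def gge by (simp add: matrix_vector_right_distrib inner_add_right)
  have t1: "(8/25) * a * X^2 \<le> G th \<bullet> (P *v G th)" using P1[of "G th"] by (simp add: X_def power2_norm_eq_inner)
  have t2: "- (a * X * Y) \<le> G th \<bullet> (P *v e)"
  proof -
    have "\<bar>G th \<bullet> (P *v e)\<bar> \<le> X * norm (P *v e)" unfolding X_def by (rule Cauchy_Schwarz_ineq2)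
    also have "\<dots> \<le> X * (a * Y)" using X0 P2[of e] by (intro mult_left_mono) (auto simp: Y_def)
    finally show ?thesis by (simp add: algebra_simps)
  qed
  have t3: "L/2 * (norm d)^2 \<le> a/4 * (X^2 + Y^2)"
  proof -
    have "(norm d)^2 \<le> (a * (X + Y))^2" using nd by (intro power_mono) auto
    then have "L/2 * (norm d)^2 \<le> L/2 * (a * (X + Y))^2" using L0 by (intro mult_left_mono) auto
    also have "\<dots> = (a * L) * a / 2 * (X + Y)^2" by (simp add: power2_eq_square algebra_simps)
    also have "\<dots> \<le> (1/4) * a / 2 * (X + Y)^2" using aL a0 by (intro mult_right_mono divide_right_mono) auto
    also have "\<dots> \<le> a/4 * (X^2 + Y^2)"
    proof -
      have "(X + Y)^2 + (X - Y)^2 = 2 * (X^2 + Y^2)" by (simp add: power2_eq_square algebra_simps)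
      then have "(X + Y)^2 \<le> 2 * (X^2 + Y^2)" using zero_le_power2[of "X - Y"] by linarith
      then have "a * (X + Y)^2 \<le> a * (2 * (X^2 + Y^2))" using a0 by (intro mult_left_mono) auto
      then show ?thesis by (simp add: field_simps)
    qed
    finally show ?thesis .
  qed
  have xy: "X * Y \<le> X^2/25 + 25 * Y^2 / 4"
  proof -
    have "0 \<le> (X/5 - 5*Y/2)^2" by simp
    also have "\<dots> = X^2/25 + 25 * Y^2 / 4 - X * Y" by (simp add: power2_eq_square field_simps)
    finally show ?thesis by simp
  qed
  have axy: "a * (X * Y) \<le> a * (X^2/25 + 25 * Y^2 / 4)" using xy a0 by (intro mult_left_mono) auto
  have "Psi (th - d) \<le> Psi th - (8/25) * a * X^2 + a * (X * Y) + a/4 * (X^2 + Y^2)"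
    using desc Gd t1 t2 t3 by (simp add: inner_minus_right) 
  also have "\<dots> \<le> Psi th - (3/100) * a * X^2 + 7 * a * Y^2"
  proof -
    have aY: "0 \<le> a * Y^2" using a0 by simp
    have "a * (X^2/25 + 25 * Y^2 / 4) = (1/25) * (a * X^2) + (25/4) * (a * Y^2)" by (simp add: algebra_simps)
    then have "a * (X * Y) \<le> (1/25) * (a * X^2) + (25/4) * (a * Y^2)" using axy by simp
    moreover have "a/4 * (X^2 + Y^2) = (1/4) * (a * X^2) + (1/4) * (a * Y^2)" by (simp add: algebra_simps)
    moreover have "(8/25) * a * X^2 = (8/25) * (a * X^2)" "(3/100) * a * X^2 = (3/100) * (a * X^2)" "7 * a * Y^2 = 7 * (a * Y^2)" by simp_all
    ultimately show ?thesis using aY by (simp add: field_simps)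
  qed
  finally show "Psi (th - P *v gg) \<le> Psi th - (3/100) * a * (norm (G th))^2 + 7 * a * (norm (gg - G th))^2"
    unfolding d_def X_def Y_def e_def .
qed



lemma lambda_bounds:
  assumes "0 \<le> v" "0 < a" "0 < r1" "r1 < r2"
  shows "1/a \<le> s2qn_lambda r1 r2 a v" "s2qn_lambda r1 r2 a v \<le> 2/a"
proof -
  define c where "c = (if v < r1 then 2 * r1 / (v + r1) else if v > r2 then 2 * v / (v + r2) else 1)"
  have eq: "s2qn_lambda r1 r2 a v = c / a" unfolding s2qn_lambda_def c_def by simp
  have c1: "1 \<le> c" and c2: "c \<le> 2" unfolding c_def using assms by (auto simp: field_simps)
  show "1/a \<le> s2qn_lambda r1 r2 a v" unfolding eq using c1 assms by (simp add: divide_right_mono)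
  show "s2qn_lambda r1 r2 a v \<le> 2/a" unfolding eq using c2 assms by (simp add: divide_right_mono)
qed

lemma ae_summable:
  fixes f :: "nat \<Rightarrow> 'w \<Rightarrow> real"
  assumes prob: "prob_space M" and sub: "\<And>k. subalgebra M (F k)"
    and fint: "\<And>k. integrable M (f k)" and f0: "\<And>k w. 0 \<le> f k w"
    and bd: "\<And>k. AE w in M. real_cond_exp M (F k) (f k) w \<le> s k"
    and a0: "\<And>k. 0 < alpha k" and sm: "summable (\<lambda>k. alpha k * s k)"
  shows "AE w in M. summable (\<lambda>k. alpha k * f k w)"
proof -
  interpret prob_space M by (rule prob)
  have Ef: "integral\<^sup>L M (f k) \<le> s k" for k
  proof -
    interpret sigma_finite_subalgebra M "F k"
      by (rule finite_measure_subalgebra_is_sigma_finite, unfold_locales) (rule sub)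
    have "integral\<^sup>L M (f k) = integral\<^sup>L M (real_cond_exp M (F k) (f k))"
      using real_cond_exp_int(2)[OF fint[of k]] by simp
    also have "\<dots> \<le> integral\<^sup>L M (\<lambda>w. s k)"
      by (rule integral_mono_AE[OF real_cond_exp_int(1)[OF fint[of k]] _ bd]) simp
    also have "\<dots> = s k" by (simp add: prob_space)
    finally show ?thesis .
  qed
  have s0: "0 \<le> s k" for k
  proof -
    have "0 \<le> integral\<^sup>L M (f k)" by (rule integral_nonneg_AE) (use f0 in auto)
    then show ?thesis using Ef[of k] by linarith
  qed
  have af0: "0 \<le> alpha k * f k w" for k w using f0[of k w] a0[of k] by simp
  have fm[measurable]: "f k \<in> borel_measurable M" for k using fint[of k] by (rule borel_measurable_integrable)
  have meas[measurable]: "(\<lambda>w. ennreal (alpha k * f k w)) \<in> borel_measurable M" for k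
    by measurable
  have "(\<integral>\<^sup>+ w. (\<Sum>k. ennreal (alpha k * f k w)) \<partial>M) = (\<Sum>k. \<integral>\<^sup>+ w. ennreal (alpha k * f k w) \<partial>M)"
    by (rule nn_integral_suminf) (use meas in auto)
  also have "\<dots> \<le> (\<Sum>k. ennreal (alpha k * s k))"
  proof (intro suminf_le summableI)
    fix k
    have "(\<integral>\<^sup>+ w. ennreal (alpha k * f k w) \<partial>M) = ennreal (integral\<^sup>L M (\<lambda>w. alpha k * f k w))"
      by (rule nn_integral_eq_integral) (use fint af0 in auto)
    also have "\<dots> \<le> ennreal (alpha k * s k)"
      using Ef[of k] a0[of k] by (intro ennreal_leI) (simp add: mult_left_mono)
    finally show "(\<integral>\<^sup>+ w. ennreal (alpha k * f k w) \<partial>M) \<le> ennreal (alpha k * s k)" .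
  qed
  also have "\<dots> < top"
  proof -
    have "\<And>k. 0 \<le> alpha k * s k" using a0 s0 by (simp add: less_imp_le)
    then have "(\<Sum>k. ennreal (alpha k * s k)) \<noteq> top" by (rule ennreal_suminf_neq_top[OF sm])
    then show ?thesis using less_top by blast
  qed
  finally have fin: "(\<integral>\<^sup>+ w. (\<Sum>k. ennreal (alpha k * f k w)) \<partial>M) \<noteq> \<infinity>" by simp
  have "AE w in M. (\<Sum>k. ennreal (alpha k * f k w)) \<noteq> \<infinity>"
    by (rule nn_integral_PInf_AE[OF _ fin]) measurable
  then show ?thesis
  proof (rule eventually_mono)
    fix w assume "(\<Sum>k. ennreal (alpha k * f k w)) \<noteq> \<infinity>"
    then show "summable (\<lambda>k. alpha k * f k w)"
      by (intro summable_suminf_not_top af0) (simp add: infinity_ennreal_def)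
  qed
qed



theorem theorem1:
  fixes M :: "'w measure"
    and F :: "nat \<Rightarrow> 'w measure"
    and N :: nat
    and psi :: "nat \<Rightarrow> real^'n \<Rightarrow> real"
    and gpsi :: "nat \<Rightarrow> real^'n \<Rightarrow> real^'n"
    and Psi :: "real^'n \<Rightarrow> real"
    and G :: "real^'n \<Rightarrow> real^'n"
    and Psi_inf L h r1 r2 :: real
    and alpha sigma :: "nat \<Rightarrow> real"
    and S :: "nat \<Rightarrow> 'w \<Rightarrow> nat set"
    and g :: "nat \<Rightarrow> 'w \<Rightarrow> real^'n"
    and g_init :: "'w \<Rightarrow> real^'n"
    and H Lam B :: "nat \<Rightarrow> 'w \<Rightarrow> real^'n^'n"
    and theta :: "nat \<Rightarrow> 'w \<Rightarrow> real^'n"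
  assumes prob: "prob_space M"
    and filt_sub: "\<And>k. subalgebra M (F k)"
    and filt_mono: "\<And>k. sets (F k) \<subseteq> sets (F (Suc k))"
    \<comment> \<open>finite-sum structure\<close>
    and N_pos: "N \<ge> 1"
    and psi_deriv: "\<And>i x. i \<in> {1..N} \<Longrightarrow> (psi i has_derivative (\<lambda>d. gpsi i x \<bullet> d)) (at x)"
    and Psi_def: "\<And>x. Psi x = (1 / real N) * (\<Sum>i=1..N. psi i x)"
    \<comment> \<open>assumption (i)\<close>
    and Psi_deriv: "\<And>x. (Psi has_derivative (\<lambda>d. G x \<bullet> d)) (at x)"
    and G_cont: "continuous_on UNIV G"
    and Psi_lb: "\<And>x. Psi_inf \<le> Psi x"
    and L_ge: "L \<ge> 1"
    and G_lip: "\<And>x y. norm (G x - G y) \<le> L * norm (x - y)"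
    \<comment> \<open>algorithm data\<close>
    and r1_pos: "0 < r1" and r12: "r1 < r2"
    and alpha_pos: "\<And>k. 0 < alpha k"
    and S_sub: "\<And>k w. w \<in> space M \<Longrightarrow> S k w \<subseteq> {1..N}"
    and S_ne: "\<And>k w. w \<in> space M \<Longrightarrow> S k w \<noteq> {}"
    and g_def: "\<And>k w. w \<in> space M \<Longrightarrow>
                  g k w = (1 / real (card (S k w))) *\<^sub>R (\<Sum>i\<in>S k w. gpsi i (theta k w))"
    and B_def: "\<And>k w. w \<in> space M \<Longrightarrow> B k w = H k w + Lam k w"
    and B_sym: "\<And>k w. w \<in> space M \<Longrightarrow> transpose (B k w) = B k w"
    and theta_0: "\<And>w. w \<in> space M \<Longrightarrow>
        theta (Suc 0) w = theta 0 w
          - matrix_inv (B 0 w + mat (s2qn_lambda r1 r2 (alpha 0) (norm (g_init w)))) *v g 0 w"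
    and theta_Suc: "\<And>k w. w \<in> space M \<Longrightarrow>
        theta (Suc (Suc k)) w = theta (Suc k) w
          - matrix_inv (B (Suc k) w + mat (s2qn_lambda r1 r2 (alpha (Suc k)) (norm (g k w))))
              *v g (Suc k) w"
    \<comment> \<open>F k plays the role of the paper's F_(k-1)\<close>
    and theta_meas: "\<And>k. theta k \<in> borel_measurable (F k)"
    and g_meas: "\<And>k. g k \<in> borel_measurable M"
    and B_meas: "\<And>k. B k \<in> borel_measurable M"
    \<comment> \<open>assumption (ii)\<close>
    and indep: "\<And>k. cond_indep M (F k) (B k) (g k)"
    and g_int: "\<And>k i. integrable M (\<lambda>w. g k w $ i)"
    and unbiased: "\<And>k i. AE w in M. real_cond_exp M (F k) (\<lambda>w. g k w $ i) w = G (theta k w) $ i"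
    \<comment> \<open>assumption (iii)\<close>
    and var_int: "\<And>k. integrable M (\<lambda>w. (norm (g k w - G (theta k w)))\<^sup>2)"
    and var_bd: "\<And>k. AE w in M.
        real_cond_exp M (F k) (\<lambda>w. (norm (g k w - G (theta k w)))\<^sup>2) w \<le> (sigma k)\<^sup>2"
    \<comment> \<open>assumption (iv)\<close>
    and h_pos: "h > 0"
    and B_bounds: "\<And>k w. w \<in> space M \<Longrightarrow> loewner_le 0 (B k w) \<and> loewner_le (B k w) (mat h)"
    \<comment> \<open>step-size conditions\<close>
    and alpha_bd: "\<And>k. alpha k \<le> r1 / (4 * r2 * (L + h))"
    and alpha_nonsum: "\<not> summable alpha"
    and alpha_sigma_sum: "summable (\<lambda>k. alpha k * (sigma k)\<^sup>2)"
  shows "AE w in M. (\<lambda>k. G (theta k w)) \<longlonglongrightarrow> 0"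
proof -
  have L0: "0 \<le> L" using L_ge by simp
  have aLh: "alpha k * (L + h) \<le> 1/4" for k
  proof -
    have Lh: "0 < L + h" using L_ge h_pos by simp
    have e: "r1 / (4 * r2 * (L + h)) = (r1 / r2) * (1 / (4 * (L + h)))" by simp
    have "r1 / r2 \<le> 1" using r1_pos r12 by simp
    then have "(r1 / r2) * (1 / (4 * (L + h))) \<le> 1 * (1 / (4 * (L + h)))"
      using Lh by (intro mult_right_mono) auto
    then have "r1 / (4 * r2 * (L + h)) \<le> 1 / (4 * (L + h))" unfolding e by simp
    then have "alpha k \<le> 1 / (4 * (L + h))" using alpha_bd[of k] by linarith
    then show ?thesis using Lh by (simp add: field_simps)
  qed
  have aL: "alpha k * L \<le> 1/4" for k using aLh[of k] alpha_pos[of k] h_pos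
    by (smt (verit) distrib_left mult_pos_pos)
  have ah: "alpha k * h \<le> 1/4" for k using aLh[of k] alpha_pos[of k] L0
    by (smt (verit) distrib_left mult_nonneg_nonneg)
  have AEs: "AE w in M. summable (\<lambda>k. alpha k * (\<lambda>k w. (norm (g k w - G (theta k w)))\<^sup>2) k w)"
    by (rule ae_summable[where f="\<lambda>k w. (norm (g k w - G (theta k w)))\<^sup>2" and s="\<lambda>k. (sigma k)\<^sup>2",
          OF prob filt_sub var_int _ var_bd alpha_pos alpha_sigma_sum]) simp
  have "AE w in M. summable (\<lambda>k. alpha k * (norm (g k w - G (theta k w)))\<^sup>2) \<longrightarrow> (\<lambda>k. G (theta k w)) \<longlonglongrightarrow> 0"
  proof (rule AE_I2, rule impI)
    fix w assume w: "w \<in> space M"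
    assume Ysum: "summable (\<lambda>k. alpha k * (norm (g k w - G (theta k w)))\<^sup>2)"
    define lam where "lam k = s2qn_lambda r1 r2 (alpha k) (if k = 0 then norm (g_init w) else norm (g (k-1) w))" for k
    define P where "P k = matrix_inv (B k w + mat (lam k))" for k
    have rec: "theta (Suc k) w = theta k w - P k *v g k w" for k
    proof (cases k)
      case 0 then show ?thesis using theta_0[OF w] by (simp add: P_def lam_def)
    next
      case (Suc j) then show ?thesis using theta_Suc[OF w, of j] by (simp add: P_def lam_def)
    qed
    have lam1: "1 / alpha k \<le> lam k" and lam2: "lam k \<le> 2 / alpha k" for k
      unfolding lam_def using lambda_bounds[OF _ alpha_pos r1_pos r12] by auto
    have psd: "0 \<le> z \<bullet> (B k w *v z)" for k z
      using B_bounds[OF w, of k] unfolding loewner_le_def by (metis inner_zero_right matrix_vector_mult_0)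
    have ub: "z \<bullet> (B k w *v z) \<le> h * (z \<bullet> z)" for k z
      using B_bounds[OF w, of k] unfolding loewner_le_def by (metis mat_mulv inner_scaleR_right)
    have P1: "(8/25) * alpha k * (v \<bullet> v) \<le> v \<bullet> (P k *v v)" for k v
      unfolding P_def by (rule precond(1)[OF B_sym[OF w] psd ub less_imp_le[OF h_pos] alpha_pos lam1 lam2 ah])
    have P2: "norm (P k *v v) \<le> alpha k * norm v" for k v
      unfolding P_def by (rule precond(2)[OF B_sym[OF w] psd ub less_imp_le[OF h_pos] alpha_pos lam1 lam2 ah])
    define X where "X k = norm (G (theta k w))" for k
    define Y where "Y k = norm (g k w - G (theta k w))" for k
    have desc: "Psi (theta (Suc k) w) \<le> Psi (theta k w) - (3/100) * alpha k * (X k)^2 + 7 * alpha k * (Y k)^2" for k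
      unfolding rec X_def Y_def
      by (rule step_bound(1)[OF Psi_deriv G_lip L0 alpha_pos aL P1 P2])
    have Xs: "X (Suc k) \<le> X k + L * alpha k * (X k + Y k)" for k
      unfolding rec X_def Y_def
      by (rule step_bound(2)[OF Psi_deriv G_lip L0 alpha_pos aL P1 P2])
    have Ys: "summable (\<lambda>k. alpha k * (Y k)^2)" using Ysum by (simp add: Y_def)
    have part: "(3/100) * (\<Sum>k<n. alpha k * (X k)^2) \<le> Psi (theta 0 w) - Psi (theta n w) + 7 * (\<Sum>k<n. alpha k * (Y k)^2)" for n
    proof (induction n)
      case (Suc n)
      then show ?case using desc[of n] by (simp add: algebra_simps)
    qed simp
    have Xsum: "summable (\<lambda>k. alpha k * (X k)^2)"
    proof (rule summableI_nonneg_bounded)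
      show "0 \<le> alpha k * (X k)^2" for k using alpha_pos[of k] by simp
      fix n
      have "(\<Sum>k<n. alpha k * (Y k)^2) \<le> (\<Sum>k. alpha k * (Y k)^2)"
        by (rule sum_le_suminf[OF Ys]) (use alpha_pos in \<open>auto simp: less_imp_le\<close>)
      then have "(3/100) * (\<Sum>k<n. alpha k * (X k)^2) \<le> Psi (theta 0 w) - Psi_inf + 7 * (\<Sum>k. alpha k * (Y k)^2)"
        using part[of n] Psi_lb[of "theta n w"] by linarith
      then show "(\<Sum>k<n. alpha k * (X k)^2) \<le> (100/3) * (Psi (theta 0 w) - Psi_inf + 7 * (\<Sum>k. alpha k * (Y k)^2))"
        by (simp add: field_simps)
    qed
    have "X \<longlonglongrightarrow> 0"
    proof (rule xseq_to_zero[where y=Y and c=L and a=alpha])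
      show "\<And>k. X (Suc k) \<le> X k + L * alpha k * (X k + Y k)" by (rule Xs)
      show "\<And>k. L * alpha k \<le> 1/4" using aL by (simp add: mult.commute)
    qed (use L0 alpha_pos alpha_nonsum Xsum Ys in \<open>auto simp: X_def Y_def\<close>)
    then show "(\<lambda>k. G (theta k w)) \<longlonglongrightarrow> 0" unfolding X_def by (simp add: tendsto_norm_zero_iff)
  qed
  then show ?thesis using AEs by (auto elim: AE_mp)
qed


end
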